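(* Let $b>0$, $\sigma>0$. Let $A\subseteq\mathbb{R}$ be a closed set with smallest element $\theta_*$, and let $c:A\to\mathbb{R}$ be nondecreasing and left-continuous with $c(\theta_* )=0$, $c(x)>0$ for $x\in A$, $x>\theta_*$, and, if $A$ is unbounded, $\inf\{c(x)/x: x\in A,x\ge y\}\uparrow\infty$ as $y\uparrow\infty$. Let $\phi(y)=\sup_{x\in A}\{yx-c(x)\}$ for $y\ge0$; for $p>0$ let $\phi_*(p)=-\inf\{\phi(y):y\in[0,p]\}$ and $F(\gamma,p)=\int_0^p\frac{du}{\phi(u)+\gamma}$ for $\gamma\in(\phi_*(p),\infty)$. Then for each $p>0$ there exists a unique $\gamma(p)\in(\phi_*(p),\infty)$ such that $\tfrac12\sigma^2F(\gamma(p),p)=b$.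
   Context: Under the assumptions, $\phi$ is finite, convex and continuous on $[0,\infty)$, so $\phi_*(p)$ is finite. *)

theory Defs
  imports "HOL-Analysis.Analysis"
begin

definition phi :: "real set \<Rightarrow> (real \<Rightarrow> real) \<Rightarrow> real \<Rightarrow> real" where
  "phi A c y = Sup ((\<lambda>x. y * x - c x) ` A)"

definition phi_star :: "real set \<Rightarrow> (real \<Rightarrow> real) \<Rightarrow> real \<Rightarrow> real" where
  "phi_star A c p = - Inf (phi A c ` {0..p})"

definition F :: "real set \<Rightarrow> (real \<Rightarrow> real) \<Rightarrow> real \<Rightarrow> real \<Rightarrow> real" where
  "F A c \<gamma> p = integral {0..p} (\<lambda>u. 1 / (phi A c u + \<gamma>))"

end

theory Submission
  imports Defs
begin

lemma log_int1:
  fixes e K L a :: real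
  assumes "e > 0" "K > 0" "L > 0"
  shows "((\<lambda>u. 1/(e + K*(u-a))) has_integral ((ln(e+K*L) - ln e)/K)) {a..a+L}"
proof -
  have "((\<lambda>u. 1/(e + K*(u-a))) has_integral ((\<lambda>u. ln(e+K*(u-a))/K) (a+L) - (\<lambda>u. ln(e+K*(u-a))/K) a)) {a..a+L}"
  proof (rule fundamental_theorem_of_calculus)
    show "a \<le> a + L" using assms by simp
    fix x assume x: "x \<in> {a..a+L}"
    have pos: "e + K*(x-a) > 0" using x assms by (simp add: add_pos_nonneg)
    have "((\<lambda>u. ln(e+K*(u-a))/K) has_real_derivative (1/(e+K*(x-a)))) (at x within {a..a+L})"
      by (rule derivative_eq_intros refl | use pos assms in simp)+
    then show "((\<lambda>u. ln(e+K*(u-a))/K) has_vector_derivative (1/(e+K*(x-a)))) (at x within {a..a+L})"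
      by (simp add: has_real_derivative_iff_has_vector_derivative)
  qed
  then show ?thesis by (simp add: diff_divide_distrib)
qed

lemma log_int2:
  fixes e K L a :: real
  assumes "e > 0" "K > 0" "L > 0"
  shows "((\<lambda>u. 1/(e + K*(a-u))) has_integral ((ln(e+K*L) - ln e)/K)) {a-L..a}"
proof -
  have "((\<lambda>u. 1/(e + K*(a-u))) has_integral ((\<lambda>u. - ln(e+K*(a-u))/K) a - (\<lambda>u. - ln(e+K*(a-u))/K) (a-L))) {a-L..a}"
  proof (rule fundamental_theorem_of_calculus)
    show "a - L \<le> a" using assms by simp
    fix x assume x: "x \<in> {a-L..a}"
    have pos: "e + K*(a-x) > 0" using x assms by (simp add: add_pos_nonneg)
    have "((\<lambda>u. - ln(e+K*(a-u))/K) has_real_derivative (1/(e+K*(a-x)))) (at x within {a-L..a})"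
      by (rule derivative_eq_intros refl | use pos assms in simp)+
    then show "((\<lambda>u. - ln(e+K*(a-u))/K) has_vector_derivative (1/(e+K*(a-x)))) (at x within {a-L..a})"
      by (simp add: has_real_derivative_iff_has_vector_derivative)
  qed
  then show ?thesis by (simp add: diff_divide_distrib)
qed

lemma generic:
  fixes g :: "real \<Rightarrow> real" and p K C b u0 :: real
  assumes p: "p > 0" and K: "K > 0" and C: "C > 0" and b: "b > 0"
    and u0: "u0 \<in> {0..p}" and gmin: "\<forall>u\<in>{0..p}. g u0 \<le> g u"
    and lip: "\<forall>u\<in>{0..p}. \<forall>v\<in>{0..p}. g u \<le> g v + K*\<bar>u-v\<bar>"
  shows "\<exists>!\<gamma>. \<gamma> > - g u0 \<and> C * integral {0..p} (\<lambda>u. 1/(g u + \<gamma>)) = b"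
proof -
  define m where "m = g u0"
  define I where "I = (\<lambda>\<gamma>. integral {0..p} (\<lambda>u. 1/(g u + \<gamma>)))"
  have cont: "continuous_on {0..p} g"
    unfolding continuous_on_iff
  proof (intro ballI allI impI)
    fix x e :: real assume x: "x \<in> {0..p}" and e: "e > 0"
    show "\<exists>d>0. \<forall>x'\<in>{0..p}. dist x' x < d \<longrightarrow> dist (g x') (g x) < e"
    proof (intro exI[of _ "e/K"] conjI ballI impI)
      show "e/K > 0" using e K by simp
      fix x' assume x': "x' \<in> {0..p}" and d: "dist x' x < e/K"
      have "K * \<bar>x' - x\<bar> < e" using d K by (simp add: dist_real_def field_simps)
      moreover have "g x' \<le> g x + K*\<bar>x'-x\<bar>" "g x \<le> g x' + K*\<bar>x-x'\<bar>" using lip x x' by auto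
      ultimately show "dist (g x') (g x) < e" by (simp add: dist_real_def abs_minus_commute)
    qed
  qed
  have gB: "g u \<le> m + K*p" if "u \<in> {0..p}" for u
  proof -
    have "g u \<le> m + K*\<bar>u-u0\<bar>" using lip that u0 m_def by auto
    moreover have "\<bar>u-u0\<bar> \<le> p" using that u0 by auto
    ultimately show ?thesis using K by (smt (verit) mult_left_mono)
  qed
  have gm: "g u \<ge> m" if "u \<in> {0..p}" for u using gmin that m_def by auto
  have integ: "(\<lambda>u. 1/(g u + \<gamma>)) integrable_on {0..p}" if "\<gamma> > -m" for \<gamma>
  proof (rule integrable_continuous_interval)
    show "continuous_on {0..p} (\<lambda>u. 1/(g u + \<gamma>))"
      using gm that by (intro continuous_intros cont) (smt (verit) atLeastAtMost_iff)
  qed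
  have upper: "I \<gamma> \<le> p/(\<gamma>+m)" if "\<gamma> > -m" for \<gamma>
  proof -
    have "I \<gamma> \<le> integral {0..p} (\<lambda>u. 1/(\<gamma>+m))"
      unfolding I_def
    proof (rule integral_le[OF integ[OF that]])
      show "(\<lambda>u. 1/(\<gamma>+m)) integrable_on {0..p}" by (intro integrable_continuous_interval continuous_intros)
      fix u assume "u \<in> {0..p}"
      then have "g u + \<gamma> \<ge> \<gamma> + m" using gm by auto
      then show "1/(g u + \<gamma>) \<le> 1/(\<gamma>+m)" using that by (intro divide_left_mono) auto
    qed
    also have "\<dots> = p/(\<gamma>+m)" using p by simp
    finally show ?thesis .
  qed
  have strict: "I \<gamma>' < I \<gamma>" if "-m < \<gamma>" "\<gamma> < \<gamma>'" for \<gamma> \<gamma>'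
  proof -
    define B where "B = m + K*p"
    define d where "d = (\<gamma>'-\<gamma>)/((B+\<gamma>)*(B+\<gamma>'))"
    have Bg: "B + \<gamma> > 0" using that K p B_def by (smt (verit) mult_pos_pos)
    have dpos: "d > 0" using Bg that d_def by simp
    have "integral {0..p} (\<lambda>u. d) \<le> integral {0..p} (\<lambda>u. 1/(g u + \<gamma>) - 1/(g u + \<gamma>'))"
    proof (rule integral_le)
      show "(\<lambda>u. d) integrable_on {0..p}" by (intro integrable_continuous_interval continuous_intros)
      show "(\<lambda>u. 1/(g u + \<gamma>) - 1/(g u + \<gamma>')) integrable_on {0..p}"
        using integ that by (intro integrable_diff) auto
      fix u assume u: "u \<in> {0..p}"
      have a1: "0 < g u + \<gamma>" "g u + \<gamma> \<le> B + \<gamma>" "0 < g u + \<gamma>'" "g u + \<gamma>' \<le> B + \<gamma>'"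
        using gm[OF u] gB[OF u] that B_def by auto
      have eq: "1/(g u + \<gamma>) - 1/(g u + \<gamma>') = (\<gamma>'-\<gamma>)/((g u + \<gamma>)*(g u + \<gamma>'))"
        using a1 by (simp add: field_simps)
      have "(g u + \<gamma>)*(g u + \<gamma>') \<le> (B+\<gamma>)*(B+\<gamma>')"
        using a1 by (intro mult_mono) auto
      then have "d \<le> (\<gamma>'-\<gamma>)/((g u + \<gamma>)*(g u + \<gamma>'))"
        unfolding d_def using a1 that by (intro divide_left_mono) auto
      then show "d \<le> 1/(g u + \<gamma>) - 1/(g u + \<gamma>')" using eq by simp
    qed
    also have "\<dots> = I \<gamma> - I \<gamma>'"
      unfolding I_def using integ that by (intro integral_diff) auto
    finally have "p * d \<le> I \<gamma> - I \<gamma>'" using p by simp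
    moreover have "p * d > 0" using p dpos by simp
    ultimately show ?thesis by linarith
  qed
  have lipI: "\<bar>I \<gamma> - I \<gamma>'\<bar> \<le> \<bar>\<gamma>-\<gamma>'\<bar>/(\<gamma>0+m)^2 * p"
    if "-m < \<gamma>0" "\<gamma>0 \<le> \<gamma>" "\<gamma>0 \<le> \<gamma>'" for \<gamma> \<gamma>' \<gamma>0
  proof -
    have "I \<gamma> - I \<gamma>' = integral {0..p} (\<lambda>u. 1/(g u + \<gamma>) - 1/(g u + \<gamma>'))"
      unfolding I_def using integ that by (intro integral_diff[symmetric]) auto
    moreover have "((\<lambda>u. 1/(g u + \<gamma>) - 1/(g u + \<gamma>')) has_integral integral {0..p} (\<lambda>u. 1/(g u + \<gamma>) - 1/(g u + \<gamma>'))) {0..p}"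
      using integ that by (intro integrable_integral integrable_diff) auto
    ultimately have hi: "((\<lambda>u. 1/(g u + \<gamma>) - 1/(g u + \<gamma>')) has_integral (I \<gamma> - I \<gamma>')) {0..p}" by simp
    have "norm (I \<gamma> - I \<gamma>') \<le> \<bar>\<gamma>-\<gamma>'\<bar>/(\<gamma>0+m)^2 * Henstock_Kurzweil_Integration.content {0..p}"
    proof (rule has_integral_bound_real[OF _ _ hi, where S="{}"])
      show "0 \<le> \<bar>\<gamma>-\<gamma>'\<bar>/(\<gamma>0+m)^2" by simp
      fix u assume "u \<in> {0..p} - {}"
      then have u: "u \<in> {0..p}" by simp
      have a1: "\<gamma>0 + m \<le> g u + \<gamma>" "\<gamma>0 + m \<le> g u + \<gamma>'" "0 < \<gamma>0 + m"
        using gm[OF u] that by auto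
      have eq: "1/(g u + \<gamma>) - 1/(g u + \<gamma>') = (\<gamma>'-\<gamma>)/((g u + \<gamma>)*(g u + \<gamma>'))"
        using a1 by (simp add: field_simps)
      have "(\<gamma>0+m)^2 \<le> (g u + \<gamma>)*(g u + \<gamma>')"
        unfolding power2_eq_square using a1 by (intro mult_mono) auto
      then have "\<bar>\<gamma>'-\<gamma>\<bar>/((g u + \<gamma>)*(g u + \<gamma>')) \<le> \<bar>\<gamma>-\<gamma>'\<bar>/(\<gamma>0+m)^2"
        using a1 unfolding abs_minus_commute[of \<gamma>' \<gamma>] by (intro divide_left_mono) auto
      moreover have pp: "(g u + \<gamma>)*(g u + \<gamma>') > 0" using a1 by simp
      ultimately show "norm (1/(g u + \<gamma>) - 1/(g u + \<gamma>')) \<le> \<bar>\<gamma>-\<gamma>'\<bar>/(\<gamma>0+m)^2"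
        using eq by (simp add: abs_divide abs_of_pos[OF pp])
    qed auto
    then show ?thesis using p by simp
  qed
  have diverge: "\<exists>\<gamma>>-m. I \<gamma> > T" for T
  proof -
    define L where "L = p/2"
    define Tp where "Tp = K * \<bar>T\<bar> + 1"
    define e where "e = K*L*exp(-Tp)"
    have L: "L > 0" using p L_def by simp
    have e: "e > 0" using K L e_def by simp
    have lnbound: "ln(e+K*L) - ln e > Tp"
    proof -
      have "ln e = ln (K*L) - Tp" using K L e_def by (simp add: ln_mult)
      moreover have "ln (K*L) < ln(e+K*L)" using e K L by (intro ln_less_cancel_iff[THEN iffD2]) (auto intro: add_pos_pos)
      ultimately show ?thesis by simp
    qed
    have qT: "(ln(e+K*L) - ln e)/K > T"
    proof -
      have "K*T < Tp" using K Tp_def by (smt (verit) abs_ge_self mult_left_mono)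
      then have "K*T < ln(e+K*L) - ln e" using lnbound by simp
      then show ?thesis using K by (simp add: field_simps)
    qed
    define \<gamma> where "\<gamma> = e - m"
    have ub: "g u + \<gamma> \<le> e + K*\<bar>u-u0\<bar>" if "u \<in> {0..p}" for u
    proof -
      have "g u \<le> g u0 + K*\<bar>u-u0\<bar>" using lip that u0 by blast
      then show ?thesis using \<gamma>_def m_def by simp
    qed
    have lb: "g u + \<gamma> > 0" if "u \<in> {0..p}" for u using gm[OF that] \<gamma>_def e by simp
    have sub: "integral {0..p} (\<lambda>u. 1/(g u + \<gamma>)) \<ge> (ln(e+K*L) - ln e)/K"
    proof (cases "u0 \<le> L")
      case True
      have S: "{u0..u0+L} \<subseteq> {0..p}" using True u0 L_def by auto
      have "(ln(e+K*L) - ln e)/K = integral {u0..u0+L} (\<lambda>u. 1/(e + K*(u-u0)))"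
        using log_int1[OF e K L, of u0] by (simp add: integral_unique)
      also have "\<dots> \<le> integral {u0..u0+L} (\<lambda>u. 1/(g u + \<gamma>))"
      proof (rule integral_le)
        show "(\<lambda>u. 1/(e + K*(u-u0))) integrable_on {u0..u0+L}"
          using log_int1[OF e K L, of u0] by blast
        show "(\<lambda>u. 1/(g u + \<gamma>)) integrable_on {u0..u0+L}"
          using integrable_subinterval_real[OF integ S] \<gamma>_def e by simp
        fix u assume u: "u \<in> {u0..u0+L}"
        then have "u \<in> {0..p}" using S by auto
        then have "0 < g u + \<gamma>" "g u + \<gamma> \<le> e + K*(u-u0)" using ub[of u] lb[of u] u abs_of_nonneg[of "u - u0"] by auto
        then show "1/(e + K*(u-u0)) \<le> 1/(g u + \<gamma>)" by (intro divide_left_mono) auto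
      qed
      also have "\<dots> \<le> integral {0..p} (\<lambda>u. 1/(g u + \<gamma>))"
      proof (rule integral_subset_le[OF S])
        show "(\<lambda>u. 1/(g u + \<gamma>)) integrable_on {u0..u0+L}"
          using integrable_subinterval_real[OF integ S] \<gamma>_def e by simp
        show "(\<lambda>u. 1/(g u + \<gamma>)) integrable_on {0..p}" using integ \<gamma>_def e by simp
        show "\<forall>u\<in>{0..p}. 0 \<le> 1/(g u + \<gamma>)" using lb by (simp add: less_imp_le)
      qed
      finally show ?thesis .
    next
      case False
      have S: "{u0-L..u0} \<subseteq> {0..p}" using False u0 L_def by auto
      have "(ln(e+K*L) - ln e)/K = integral {u0-L..u0} (\<lambda>u. 1/(e + K*(u0-u)))"
        using log_int2[OF e K L, of u0] by (simp add: integral_unique)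
      also have "\<dots> \<le> integral {u0-L..u0} (\<lambda>u. 1/(g u + \<gamma>))"
      proof (rule integral_le)
        show "(\<lambda>u. 1/(e + K*(u0-u))) integrable_on {u0-L..u0}"
          using log_int2[OF e K L, of u0] by blast
        show "(\<lambda>u. 1/(g u + \<gamma>)) integrable_on {u0-L..u0}"
          using integrable_subinterval_real[OF integ S] \<gamma>_def e by simp
        fix u assume u: "u \<in> {u0-L..u0}"
        then have "u \<in> {0..p}" using S by auto
        then have "0 < g u + \<gamma>" "g u + \<gamma> \<le> e + K*(u0-u)" using ub[of u] lb[of u] u abs_of_nonneg[of "u0 - u"] by auto
        then show "1/(e + K*(u0-u)) \<le> 1/(g u + \<gamma>)" by (intro divide_left_mono) auto
      qed
      also have "\<dots> \<le> integral {0..p} (\<lambda>u. 1/(g u + \<gamma>))"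
      proof (rule integral_subset_le[OF S])
        show "(\<lambda>u. 1/(g u + \<gamma>)) integrable_on {u0-L..u0}"
          using integrable_subinterval_real[OF integ S] \<gamma>_def e by simp
        show "(\<lambda>u. 1/(g u + \<gamma>)) integrable_on {0..p}" using integ \<gamma>_def e by simp
        show "\<forall>u\<in>{0..p}. 0 \<le> 1/(g u + \<gamma>)" using lb by (simp add: less_imp_le)
      qed
      finally show ?thesis .
    qed
    show ?thesis using sub qT e \<gamma>_def I_def by (intro exI[of _ \<gamma>]) auto
  qed
  obtain \<gamma>1 where g1: "\<gamma>1 > -m" "I \<gamma>1 > b/C" using diverge by blast
  define \<gamma>2 where "\<gamma>2 = \<gamma>1 + p*C/b"
  have g2: "\<gamma>1 \<le> \<gamma>2" using \<gamma>2_def p C b by simp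
  have "I \<gamma>2 \<le> p/(\<gamma>2+m)" using upper g1 g2 by simp
  also have "\<dots> < b/C"
  proof -
    have "\<gamma>2 + m > p*C/b" using \<gamma>2_def g1 by simp
    then have "p < (\<gamma>2+m)*(b/C)" using C b by (simp add: field_simps)
    then show ?thesis using g1 g2 by (simp add: field_simps)
  qed
  finally have I2: "I \<gamma>2 < b/C" .
  have contI: "continuous_on {\<gamma>1..\<gamma>2} (\<lambda>\<gamma>. C * I \<gamma>)"
  proof -
    have "continuous_on {\<gamma>1..\<gamma>2} I"
      unfolding continuous_on_iff
    proof (intro ballI allI impI)
      fix x e :: real assume x: "x \<in> {\<gamma>1..\<gamma>2}" and e: "e > 0"
      define k where "k = p/(\<gamma>1+m)^2"
      have k: "k > 0" using k_def p g1 by simp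
      show "\<exists>d>0. \<forall>x'\<in>{\<gamma>1..\<gamma>2}. dist x' x < d \<longrightarrow> dist (I x') (I x) < e"
      proof (intro exI[of _ "e/k"] conjI ballI impI)
        show "e/k > 0" using e k by simp
        fix x' assume x': "x' \<in> {\<gamma>1..\<gamma>2}" and d: "dist x' x < e/k"
        have "\<bar>I x' - I x\<bar> \<le> \<bar>x'-x\<bar>/(\<gamma>1+m)^2 * p" using lipI[of \<gamma>1 x' x] g1 x x' by auto
        also have "\<dots> = k * \<bar>x'-x\<bar>" using k_def by simp
        also have "\<dots> < e" using d k by (simp add: dist_real_def field_simps)
        finally show "dist (I x') (I x) < e" by (simp add: dist_real_def)
      qed
    qed
    then show ?thesis by (intro continuous_intros)
  qed
  have "C * I \<gamma>2 \<le> b" "b \<le> C * I \<gamma>1" using I2 g1 C by (simp_all add: field_simps)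
  from IVT2'[OF this g2 contI] obtain \<gamma> where \<gamma>: "\<gamma>1 \<le> \<gamma>" "\<gamma> \<le> \<gamma>2" "C * I \<gamma> = b" by blast
  show ?thesis
  proof (rule ex1I[of _ \<gamma>])
    show "\<gamma> > - g u0 \<and> C * integral {0..p} (\<lambda>u. 1/(g u + \<gamma>)) = b"
      using \<gamma> g1 m_def I_def by auto
    fix \<gamma>' assume h: "\<gamma>' > - g u0 \<and> C * integral {0..p} (\<lambda>u. 1/(g u + \<gamma>')) = b"
    then have "C * I \<gamma>' = C * I \<gamma>" using \<gamma> I_def by simp
    then have eqI: "I \<gamma>' = I \<gamma>" using C by simp
    show "\<gamma>' = \<gamma>"
    proof (rule ccontr)
      assume "\<gamma>' \<noteq> \<gamma>"
      then have "\<gamma>' < \<gamma> \<or> \<gamma> < \<gamma>'" by linarith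
      then show False using strict[of \<gamma>' \<gamma>] strict[of \<gamma> \<gamma>'] eqI h \<gamma> g1 m_def by auto
    qed
  qed
qed



theorem corollary1:
  fixes b \<sigma> \<theta> :: real and A :: "real set" and c :: "real \<Rightarrow> real"
  assumes b_pos: "b > 0" and sigma_pos: "\<sigma> > 0"
    and A_closed: "closed A"
    and theta_in: "\<theta> \<in> A" and theta_min: "\<forall>x\<in>A. \<theta> \<le> x"
    and c_mono: "mono_on A c"
    and c_leftcont: "\<forall>x\<in>A. continuous (at x within (A \<inter> {..<x})) c"
    and c_theta: "c \<theta> = 0"
    and c_pos: "\<forall>x\<in>A. x > \<theta> \<longrightarrow> c x > 0"
    and growth: "\<not> bounded A \<Longrightarrow>
       filterlim (\<lambda>y. Inf ((\<lambda>x. c x / x) ` {x \<in> A. x \<ge> y})) at_top at_top"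
  shows "\<forall>p>0. \<exists>!\<gamma>. \<gamma> > phi_star A c p \<and> \<sigma>\<^sup>2 / 2 * F A c \<gamma> p = b"
proof (intro allI impI)
  fix p :: real assume p: "p > 0"
  have cnn: "c x \<ge> 0" if "x \<in> A" for x
    using c_mono theta_in that theta_min c_theta by (metis mono_onD)
  obtain M where M: "M \<ge> \<theta>" and big: "\<forall>y\<in>{0..p}. \<forall>x\<in>A. x > M \<longrightarrow> y*x - c x \<le> y*\<theta>"
  proof (cases "bounded A")
    case True
    then obtain B where B: "\<forall>x\<in>A. \<bar>x\<bar> \<le> B" by (meson bounded_real)
    show ?thesis
    proof (rule that[of "B"])
      show "\<theta> \<le> B" using B theta_in by force
      show "\<forall>y\<in>{0..p}. \<forall>x\<in>A. x > B \<longrightarrow> y*x - c x \<le> y*\<theta>" using B by force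
    qed
  next
    case False
    have "eventually (\<lambda>y. p + 1 \<le> Inf ((\<lambda>x. c x / x) ` {x \<in> A. x \<ge> y})) at_top"
      using growth[OF False] by (simp add: filterlim_at_top)
    then obtain Y0 where Y0: "\<forall>y\<ge>Y0. p + 1 \<le> Inf ((\<lambda>x. c x / x) ` {x \<in> A. x \<ge> y})"
      by (auto simp: eventually_at_top_linorder)
    define y1 where "y1 = max Y0 (\<bar>\<theta>\<bar>+1) + p*\<bar>\<theta>\<bar>"
    have y1: "y1 \<ge> Y0" "y1 \<ge> \<bar>\<theta>\<bar>+1" "y1 \<ge> p*\<bar>\<theta>\<bar>" 
      using y1_def mult_nonneg_nonneg[of p "\<bar>\<theta>\<bar>"] p max.cobounded1[of Y0 "\<bar>\<theta>\<bar>+1"] max.cobounded2[of "\<bar>\<theta>\<bar>+1" Y0]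
      by (smt (verit))+
    have inf1: "p + 1 \<le> Inf ((\<lambda>x. c x / x) ` {x \<in> A. x \<ge> y1})" using Y0 y1 by auto
    have bdd: "bdd_below ((\<lambda>x. c x / x) ` {x \<in> A. x \<ge> y1})"
    proof (rule bdd_belowI[of _ 0])
      fix z assume "z \<in> (\<lambda>x. c x / x) ` {x \<in> A. x \<ge> y1}"
      then obtain x where x: "x \<in> A" "x \<ge> y1" "z = c x / x" by auto
      have "x > 0" using x y1 by linarith
      then show "0 \<le> z" using x cnn by simp
    qed
    show ?thesis
    proof (rule that[of y1])
      show "\<theta> \<le> y1" using y1 by linarith
      show "\<forall>y\<in>{0..p}. \<forall>x\<in>A. x > y1 \<longrightarrow> y*x - c x \<le> y*\<theta>"
      proof (intro ballI impI)
        fix y x assume y: "y \<in> {0..p}" and x: "x \<in> A" and xy: "x > y1"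
        have xpos: "x > 0" using xy y1 by linarith
        have "c x / x \<ge> p + 1"
          using inf1 cInf_lower[OF _ bdd, of "c x / x"] x xy by force
        then have cx: "c x \<ge> (p+1)*x" using xpos by (simp add: field_simps)
        have "y*x \<le> p*x" using y xpos by (intro mult_right_mono) auto
        then have "y*x - c x \<le> - x" using cx by (simp add: algebra_simps)
        also have "\<dots> \<le> - (p*\<bar>\<theta>\<bar>)" using xy y1 by linarith
        also have "\<dots> \<le> y*\<theta>"
        proof -
          have "y*\<bar>\<theta>\<bar> \<le> p*\<bar>\<theta>\<bar>" using y by (intro mult_right_mono) auto
          moreover have "- (y*\<bar>\<theta>\<bar>) \<le> y*\<theta>" using y by (smt (verit) abs_ge_minus_self atLeastAtMost_iff mult_left_mono mult_minus_right)
          ultimately show ?thesis by linarith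
        qed
        finally show "y*x - c x \<le> y*\<theta>" .
      qed
    qed
  qed
  define K where "K = \<bar>\<theta>\<bar> + \<bar>M\<bar> + 1"
  have K: "K > 0" using K_def by simp
  have Ane: "A \<noteq> {}" using theta_in by auto
  have bddA: "bdd_above ((\<lambda>x. y*x - c x) ` A)" if y: "y \<in> {0..p}" for y
  proof (rule bdd_aboveI[of _ "y*(\<bar>\<theta>\<bar> + \<bar>M\<bar>)"])
    fix z assume "z \<in> (\<lambda>x. y*x - c x) ` A"
    then obtain x where x: "x \<in> A" "z = y*x - c x" by auto
    show "z \<le> y*(\<bar>\<theta>\<bar> + \<bar>M\<bar>)"
    proof (cases "x \<le> M")
      case True
      have "y*x \<le> y*(\<bar>\<theta>\<bar> + \<bar>M\<bar>)" using y True by (intro mult_left_mono) auto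
      then show ?thesis using x cnn[of x] by simp
    next
      case False
      then have "z \<le> y*\<theta>" using big y x by auto
      also have "\<dots> \<le> y*(\<bar>\<theta>\<bar> + \<bar>M\<bar>)" using y by (intro mult_left_mono) auto
      finally show ?thesis .
    qed
  qed
  have phi_ge: "y*x - c x \<le> phi A c y" if "y \<in> {0..p}" "x \<in> A" for x y
    unfolding phi_def using bddA[OF that(1)] that(2) by (rule cSUP_upper2) simp
  have lip: "\<forall>u\<in>{0..p}. \<forall>v\<in>{0..p}. phi A c u \<le> phi A c v + K*\<bar>u-v\<bar>"
  proof (intro ballI)
    fix y y' assume y: "y \<in> {0..p}" and y': "y' \<in> {0..p}"
    show "phi A c y \<le> phi A c y' + K*\<bar>y-y'\<bar>"
      unfolding phi_def[of A c y]
    proof (rule cSUP_least[OF Ane])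
      fix x assume x: "x \<in> A"
      show "y*x - c x \<le> phi A c y' + K*\<bar>y-y'\<bar>"
      proof (cases "x \<le> M")
        case True
        have ax: "\<bar>x\<bar> \<le> K" using True theta_min x K_def by auto
        have "(y-y')*x \<le> \<bar>y-y'\<bar>*\<bar>x\<bar>" by (metis abs_ge_self abs_mult)
        also have "\<dots> \<le> \<bar>y-y'\<bar>*K" using ax by (intro mult_left_mono) auto
        finally have "(y-y')*x \<le> K*\<bar>y-y'\<bar>" by (simp add: mult.commute)
        moreover have "y'*x - c x \<le> phi A c y'" using phi_ge y' x by blast
        ultimately show ?thesis by (simp add: algebra_simps)
      next
        case False
        then have h1: "y*x - c x \<le> y*\<theta>" using big y x by auto
        have ax: "\<bar>\<theta>\<bar> \<le> K" using K_def by auto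
        have "(y-y')*\<theta> \<le> \<bar>y-y'\<bar>*\<bar>\<theta>\<bar>" by (metis abs_ge_self abs_mult)
        also have "\<dots> \<le> \<bar>y-y'\<bar>*K" using ax by (intro mult_left_mono) auto
        finally have "(y-y')*\<theta> \<le> K*\<bar>y-y'\<bar>" by (simp add: mult.commute)
        moreover have "y'*\<theta> - c \<theta> \<le> phi A c y'" using phi_ge y' theta_in by blast
        ultimately show ?thesis using c_theta h1 by (simp add: algebra_simps)
      qed
    qed
  qed
  have cont: "continuous_on {0..p} (phi A c)"
    unfolding continuous_on_iff
  proof (intro ballI allI impI)
    fix x e :: real assume x: "x \<in> {0..p}" and e: "e > 0"
    show "\<exists>d>0. \<forall>x'\<in>{0..p}. dist x' x < d \<longrightarrow> dist (phi A c x') (phi A c x) < e"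
    proof (intro exI[of _ "e/K"] conjI ballI impI)
      show "e/K > 0" using e K by simp
      fix x' assume x': "x' \<in> {0..p}" and d: "dist x' x < e/K"
      have "K * \<bar>x' - x\<bar> < e" using d K by (simp add: dist_real_def field_simps)
      moreover have "phi A c x' \<le> phi A c x + K*\<bar>x'-x\<bar>" "phi A c x \<le> phi A c x' + K*\<bar>x-x'\<bar>" using lip x x' by auto
      ultimately show "dist (phi A c x') (phi A c x) < e" by (simp add: dist_real_def abs_minus_commute)
    qed
  qed
  obtain u0 where u0: "u0 \<in> {0..p}" and gmin: "\<forall>u\<in>{0..p}. phi A c u0 \<le> phi A c u"
    using continuous_attains_inf[OF compact_Icc _ cont] p by auto
  have ps: "phi_star A c p = - phi A c u0"
    unfolding phi_star_def using u0 gmin by (subst cInf_eq_minimum[of "phi A c u0"]) auto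
  have C: "\<sigma>\<^sup>2/2 > 0" using sigma_pos by simp
  show "\<exists>!\<gamma>. \<gamma> > phi_star A c p \<and> \<sigma>\<^sup>2 / 2 * F A c \<gamma> p = b"
    unfolding ps F_def by (rule generic[OF p K C b_pos u0 gmin lip])
qed


end
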